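(* Let $(\Omega',o)\to(\Omega,o)$ be a holomorphic totally geodesic embedding of pointed bounded symmetric domains, with corresponding injective Lie algebra morphism $\rho:\mathfrak g'\to\mathfrak g$, and let $p=\dim\Omega'$. Then $[\rho(\mathfrak p'^+)]\in\mathrm{Gr}(p,T_o\Omega)$ is a critical point of the function $\mathcal B\mapsto\|\Sigma(\mathcal B)\|^2$ on $\mathrm{Gr}(p,T_o\Omega)$.
   Context: A pointed bounded symmetric domain $(\Omega,o)$, $\Omega=G/K$, has data: $\mathfrak g=\mathfrak l\oplus\mathfrak p$ Cartan decomposition, $H_0$ central in $\mathfrak l$ with $\mathrm{ad}(H_0)^2$ the Cartan involution and $\mathrm{ad}(H_0)|_{\mathfrak p}$ the complex structure at $o$; $\mathfrak p^+\cong T^{1,0}_o\Omega$ is the $\sqrt{-1}$-eigenspace of $\mathrm{ad}H_0$ in $\mathfrak p^{\mathbb C}$, with Hermitian form $(\alpha,\overline\beta)_{\mathcal K}$ ($\mathcal K$ the Killing form); similarly $\mathfrak g',\mathfrak p'^+,H'_0$ for $\Omega'$. Totally geodesic holomorphic embeddings of pointed domains correspond to injective Lie algebra morphisms $\rho:\mathfrak g'\to\mathfrak g$ with $\mathrm{ad}(H_0)\rho=\rho\,\mathrm{ad}(H'_0)$; then $\rho(\mathfrak p'^+)\subset\mathfrak p^+$ is the tangent space of $\Omega'$ at $o$. $\mathrm{Gr}(p,T_o\Omega)$ is the Grassmannian of complex $p$-planes in $\mathfrak p^+$. For $\mathcal B$ with unitary basis $(e_i)$, $\Sigma(\mathcal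 B)=\sqrt{-1}\sum_i[e_i,\overline{e_i}]\in\mathfrak l^{\mathbb C}$, and $\|\cdot\|$ is the norm on $\mathfrak l^{\mathbb C}$ from $(\lambda,\overline\mu)_{\mathcal K}$. *)

theory Defs
  imports "HOL-Analysis.Analysis"
begin

text \<open>The complexified Lie algebra g^C is modelled as complex^'n (coordinates in a fixed
basis) with a complex-bilinear bracket br and the complex conjugation cj with respect to
the real form g = {x. cj x = x}.\<close>

definition lie_bracket :: "('a::field^'n \<Rightarrow> 'a^'n \<Rightarrow> 'a^'n) \<Rightarrow> bool" where
  "lie_bracket br \<longleftrightarrow>
     (\<forall>x y z. br (x + y) z = br x z + br y z) \<and>
     (\<forall>c x y. br (c *s x) y = c *s br x y) \<and>
     (\<forall>x y. br x y = - br y x) \<and>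
     (\<forall>x y z. br x (br y z) + br y (br z x) + br z (br x y) = 0)"

definition real_structure ::
  "(complex^'n \<Rightarrow> complex^'n \<Rightarrow> complex^'n) \<Rightarrow> (complex^'n \<Rightarrow> complex^'n) \<Rightarrow> bool" where
  "real_structure br cj \<longleftrightarrow>
     (\<forall>x y. cj (x + y) = cj x + cj y) \<and>
     (\<forall>c x. cj (c *s x) = cnj c *s cj x) \<and>
     (\<forall>x. cj (cj x) = x) \<and>
     (\<forall>x y. cj (br x y) = br (cj x) (cj y))"

text \<open>Killing form K(x,y) = trace(ad x o ad y), written out in the standard basis.\<close>
definition killing ::
  "('a::comm_ring_1^'n \<Rightarrow> 'a^'n \<Rightarrow> 'a^'n) \<Rightarrow> 'a^'n \<Rightarrow> 'a^'n \<Rightarrow> 'a" where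
  "killing br x y = (\<Sum>i\<in>UNIV. (br x (br y (axis i 1))) $ i)"

text \<open>Data of a pointed bounded symmetric domain: Lie algebra g (via g^C, cj), Cartan
decomposition g = l + p (complexified: L, P), and H0 central in l whose adjoint action
restricted to p is a complex structure.\<close>
definition bsd_data ::
  "(complex^'n \<Rightarrow> complex^'n \<Rightarrow> complex^'n) \<Rightarrow> (complex^'n \<Rightarrow> complex^'n) \<Rightarrow>
   (complex^'n) set \<Rightarrow> (complex^'n) set \<Rightarrow> complex^'n \<Rightarrow> bool" where
  "bsd_data br cj L P H0 \<longleftrightarrow>
     lie_bracket br \<and> real_structure br cj \<and>
     (\<forall>x. (\<forall>y. killing br x y = 0) \<longrightarrow> x = 0) \<and>
     vec.subspace L \<and> vec.subspace P \<and> cj ` L \<subseteq> L \<and> cj ` P \<subseteq> P \<and>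
     L \<inter> P = {0} \<and> (\<forall>x. \<exists>a\<in>L. \<exists>b\<in>P. x = a + b) \<and>
     (\<forall>x\<in>L. \<forall>y\<in>L. br x y \<in> L) \<and>
     (\<forall>x\<in>L. \<forall>y\<in>P. br x y \<in> P) \<and>
     (\<forall>x\<in>P. \<forall>y\<in>P. br x y \<in> L) \<and>
     (\<forall>x\<in>L. cj x = x \<and> x \<noteq> 0 \<longrightarrow> Re (killing br x x) < 0) \<and>
     (\<forall>x\<in>P. cj x = x \<and> x \<noteq> 0 \<longrightarrow> Re (killing br x x) > 0) \<and>
     H0 \<in> L \<and> cj H0 = H0 \<and>
     (\<forall>x\<in>L. br H0 x = 0) \<and>
     (\<forall>x\<in>P. br H0 (br H0 x) = - x)"

definition pplus ::
  "(complex^'n \<Rightarrow> complex^'n \<Rightarrow> complex^'n) \<Rightarrow> (complex^'n) set \<Rightarrow> complex^'n \<Rightarrow> (complex^'n) set" where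
  "pplus br P H0 = {x\<in>P. br H0 x = \<i> *s x}"

definition Gr ::
  "nat \<Rightarrow> (complex^'n \<Rightarrow> complex^'n \<Rightarrow> complex^'n) \<Rightarrow> (complex^'n) set \<Rightarrow> complex^'n \<Rightarrow> (complex^'n) set set" where
  "Gr p br P H0 = {B. vec.subspace B \<and> B \<subseteq> pplus br P H0 \<and> vec.dim B = p}"

definition unitary_basis ::
  "(complex^'n \<Rightarrow> complex^'n \<Rightarrow> complex^'n) \<Rightarrow> (complex^'n \<Rightarrow> complex^'n) \<Rightarrow>
   (complex^'n) set \<Rightarrow> nat \<Rightarrow> (nat \<Rightarrow> complex^'n) \<Rightarrow> bool" where
  "unitary_basis br cj B p e \<longleftrightarrow>
     vec.span (e ` {..<p}) = B \<and>
     (\<forall>j<p. \<forall>k<p. killing br (e j) (cj (e k)) = (if j = k then 1 else 0))"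

text \<open>Sigma(B) = sqrt(-1) * sum_i [e_i, conj e_i] for a unitary basis (e_i) of B
(independent of the choice of unitary basis).\<close>
definition Sigma ::
  "(complex^'n \<Rightarrow> complex^'n \<Rightarrow> complex^'n) \<Rightarrow> (complex^'n \<Rightarrow> complex^'n) \<Rightarrow>
   (complex^'n) set \<Rightarrow> complex^'n" where
  "Sigma br cj B =
     (let p = vec.dim B; e = (SOME e. unitary_basis br cj B p e)
      in \<i> *s (\<Sum>k<p. br (e k) (cj (e k))))"

text \<open>Squared norm on l^C coming from the Hermitian form (lambda, conj mu)_K, which is
negative definite on l^C; we take the sign making it a norm.\<close>
definition lnormsq ::
  "(complex^'n \<Rightarrow> complex^'n \<Rightarrow> complex^'n) \<Rightarrow> (complex^'n \<Rightarrow> complex^'n) \<Rightarrow> complex^'n \<Rightarrow> real" where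
  "lnormsq br cj x = - Re (killing br x (cj x))"

definition Gr_critical ::
  "nat \<Rightarrow> (complex^'n \<Rightarrow> complex^'n \<Rightarrow> complex^'n) \<Rightarrow> (complex^'n) set \<Rightarrow> complex^'n \<Rightarrow>
   ((complex^'n) set \<Rightarrow> real) \<Rightarrow> (complex^'n) set \<Rightarrow> bool" where
  "Gr_critical p br P H0 F B \<longleftrightarrow>
     B \<in> Gr p br P H0 \<and>
     (\<forall>v :: real \<Rightarrow> nat \<Rightarrow> complex^'n.
        (\<forall>t. \<forall>k<p. v t k \<in> pplus br P H0) \<and>
        (\<forall>t. inj_on (v t) {..<p} \<and> vec.independent (v t ` {..<p})) \<and>
        vec.span (v 0 ` {..<p}) = B \<and>
        (\<forall>k<p. (\<lambda>t. v t k) differentiable (at 0))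
        \<longrightarrow> ((\<lambda>t. F (vec.span (v t ` {..<p}))) has_real_derivative 0) (at 0))"

end

theory Submission imports Defs begin

locale LB =
  fixes br :: "complex^'n \<Rightarrow> complex^'n \<Rightarrow> complex^'n" and cj :: "complex^'n \<Rightarrow> complex^'n"
  assumes lb: "lie_bracket br" and rs: "real_structure br cj"
begin

lemma br_addL: "br (x + y) z = br x z + br y z" using lb unfolding lie_bracket_def by blast
lemma br_smultL: "br (c *s x) y = c *s br x y" using lb unfolding lie_bracket_def by blast
lemma br_anti: "br x y = - br y x" using lb unfolding lie_bracket_def by blast
lemma jacobi: "br x (br y z) + br y (br z x) + br z (br x y) = 0" using lb unfolding lie_bracket_def by blast
lemma br_addR: "br z (x + y) = br z x + br z y"
  by (metis br_addL br_anti minus_add_distrib)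
lemma br_smultR: "br y (c *s x) = c *s br y x"
  by (metis br_smultL br_anti vector_smult_rneg)
lemma br_zeroL[simp]: "br 0 x = 0" by (metis br_smultL vector_smult_lzero)
lemma br_zeroR[simp]: "br x 0 = 0" by (metis br_smultR vector_smult_lzero)
lemma br_negL: "br (- x) y = - br x y" by (metis add.right_inverse br_addL br_zeroL neg_eq_iff_add_eq_0)
lemma br_negR: "br y (- x) = - br y x" by (metis br_anti br_negL minus_minus)
lemma br_diffL: "br (x - y) z = br x z - br y z" by (simp only: diff_conv_add_uminus br_addL br_negL)
lemma br_diffR: "br z (x - y) = br z x - br z y" by (simp only: diff_conv_add_uminus br_addR br_negR)
lemma br_sumL: "br (\<Sum>i\<in>A. f i) z = (\<Sum>i\<in>A. br (f i) z)"
  by (induction A rule: infinite_finite_induct) (auto simp: br_addL)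
lemma br_sumR: "br z (\<Sum>i\<in>A. f i) = (\<Sum>i\<in>A. br z (f i))"
  by (induction A rule: infinite_finite_induct) (auto simp: br_addR)
lemma br_self[simp]: "br x x = 0"
proof -
  have "br x x = - br x x" by (rule br_anti)
  then show ?thesis by (simp add: vec_eq_iff)
qed

lemma cj_add: "cj (x + y) = cj x + cj y" using rs unfolding real_structure_def by blast
lemma cj_smult: "cj (c *s x) = cnj c *s cj x" using rs unfolding real_structure_def by blast
lemma cj_cj[simp]: "cj (cj x) = x" using rs unfolding real_structure_def by blast
lemma cj_br: "cj (br x y) = br (cj x) (cj y)" using rs unfolding real_structure_def by blast
lemma cj_zero[simp]: "cj 0 = 0" by (metis cj_smult complex_cnj_zero vector_smult_lzero)
lemma cj_neg: "cj (- x) = - cj x" by (metis add.right_inverse cj_add cj_zero neg_eq_iff_add_eq_0)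
lemma cj_diff: "cj (x - y) = cj x - cj y" by (simp only: diff_conv_add_uminus cj_add cj_neg)
lemma cj_sum: "cj (\<Sum>i\<in>A. f i) = (\<Sum>i\<in>A. cj (f i))"
  by (induction A rule: infinite_finite_induct) (auto simp: cj_add)

end

definition clin :: "(complex^'n \<Rightarrow> complex^'n) \<Rightarrow> bool" where
  "clin T \<longleftrightarrow> (\<forall>x y. T (x + y) = T x + T y) \<and> (\<forall>c x. T (c *s x) = c *s T x)"

definition tr :: "(complex^'n \<Rightarrow> complex^'n) \<Rightarrow> complex" where
  "tr T = (\<Sum>i\<in>UNIV. T (axis i 1) $ i)"

lemma clin_zero: assumes "clin T" shows "T 0 = 0"
proof -
  have "T ((0::complex) *s 0) = (0::complex) *s T 0" using assms unfolding clin_def by blast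
  then show ?thesis by simp
qed

lemma clin_add: "clin T \<Longrightarrow> T (x + y) = T x + T y" unfolding clin_def by blast
lemma clin_smult: "clin T \<Longrightarrow> T (c *s x) = c *s T x" unfolding clin_def by blast

lemma clin_sum: assumes "clin T" shows "T (\<Sum>i\<in>A. f i) = (\<Sum>i\<in>A. T (f i))"
proof (induction A rule: infinite_finite_induct)
  case (infinite A) then show ?case using clin_zero[OF assms] by simp
next
  case empty then show ?case using clin_zero[OF assms] by simp
next
  case (insert x F) then show ?case using clin_add[OF assms] by simp
qed

lemma clin_expand: "clin T \<Longrightarrow> T z = (\<Sum>j\<in>UNIV. z$j *s T (axis j 1))"
proof -
  assume a: "clin T"
  have "T z = T (\<Sum>j\<in>UNIV. z$j *s axis j 1)" by (simp add: basis_expansion)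
  also have "\<dots> = (\<Sum>j\<in>UNIV. z$j *s T (axis j 1))" by (simp add: clin_sum[OF a] clin_smult[OF a])
  finally show ?thesis .
qed

lemma tr_comm: assumes "clin S" "clin T" shows "tr (\<lambda>z. S (T z)) = tr (\<lambda>z. T (S z))"
proof -
  have "tr (\<lambda>z. S (T z)) = (\<Sum>i\<in>UNIV. \<Sum>j\<in>UNIV. T (axis i 1) $ j * S (axis j 1) $ i)"
    unfolding tr_def by (subst clin_expand[OF assms(1)]) (simp add: sum_component)
  also have "\<dots> = (\<Sum>j\<in>UNIV. \<Sum>i\<in>UNIV. T (axis i 1) $ j * S (axis j 1) $ i)"
    by (rule sum.swap)
  also have "\<dots> = tr (\<lambda>z. T (S z))"
    unfolding tr_def by (subst clin_expand[OF assms(2)]) (simp add: sum_component mult.commute)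
  finally show ?thesis .
qed

lemma tr_diff: "tr (\<lambda>z. f z - g z) = tr f - tr g"
  unfolding tr_def by (simp add: sum_subtractf)

context LB begin

lemma clin_br: "clin (br x)" by (simp add: clin_def br_addR br_smultR)
lemma clin_br2: "clin (\<lambda>z. br x (br y z))" by (simp add: clin_def br_addR br_smultR)

lemma killing_tr: "killing br x y = tr (\<lambda>z. br x (br y z))"
  by (simp add: killing_def tr_def)

lemma killing_sym: "killing br x y = killing br y x"
  unfolding killing_tr using tr_comm[OF clin_br clin_br] by simp

lemma br_br: "br (br x y) w = br x (br y w) - br y (br x w)"
proof -
  have "br x (br y w) + br y (br w x) + br w (br x y) = 0" by (rule jacobi)
  then have c: "br w (br x y) = - (br x (br y w) + br y (br w x))" by (simp only: add_eq_0_iff)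
  have b: "br y (br w x) = - br y (br x w)" by (subst br_anti[of w x]) (rule br_negR)
  have "br (br x y) w = - br w (br x y)" by (rule br_anti)
  then show ?thesis using c b by simp
qed

lemma killing_inv: "killing br (br x y) z = killing br x (br y z)"
proof -
  have l: "killing br (br x y) z = tr (\<lambda>w. br x (br y (br z w))) - tr (\<lambda>w. br y (br x (br z w)))"
    unfolding killing_tr by (subst tr_diff[symmetric]) (simp add: br_br)
  have r: "killing br x (br y z) = tr (\<lambda>w. br x (br y (br z w))) - tr (\<lambda>w. br x (br z (br y w)))"
    unfolding killing_tr by (subst tr_diff[symmetric]) (simp add: br_br br_diffR)
  have "tr (\<lambda>w. br y (br x (br z w))) = tr (\<lambda>w. br x (br z (br y w)))"
    using tr_comm[OF clin_br clin_br2, of y x z] by simp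
  then show ?thesis using l r by simp
qed

lemma killing_addL: "killing br (x + y) z = killing br x z + killing br y z"
  by (simp add: killing_def br_addL sum.distrib)
lemma killing_addR: "killing br z (x + y) = killing br z x + killing br z y"
  by (simp add: killing_def br_addL br_addR sum.distrib)
lemma killing_smultL: "killing br (c *s x) z = c * killing br x z"
  by (simp add: killing_def br_smultL sum_distrib_left)
lemma killing_smultR: "killing br z (c *s x) = c * killing br z x"
  by (simp add: killing_def br_smultL br_smultR sum_distrib_left)

end
context LB begin

lemma cj_expand: "cj z = (\<Sum>j\<in>UNIV. cnj (z$j) *s cj (axis j 1))"
proof -
  have "cj z = cj (\<Sum>j\<in>UNIV. z$j *s axis j 1)" by (simp add: basis_expansion)
  then show ?thesis by (simp add: cj_sum cj_smult)
qed

lemma cj_orth: "(\<Sum>i\<in>UNIV. cj (axis j 1) $ i * cnj (cj (axis i 1) $ l)) = (if j = l then 1 else 0)"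
proof -
  have "axis j 1 = cj (cj (axis j 1))" by simp
  also have "\<dots> = (\<Sum>i\<in>UNIV. cnj (cj (axis j 1) $ i) *s cj (axis i 1))" by (rule cj_expand)
  finally have e: "axis j (1::complex) = (\<Sum>i\<in>UNIV. cnj (cj (axis j 1) $ i) *s cj (axis i 1))" .
  have "axis j (1::complex) $ l = (\<Sum>i\<in>UNIV. cnj (cj (axis j 1) $ i) *s cj (axis i 1)) $ l"
    by (subst e[symmetric]) (rule refl)
  then have "axis j (1::complex) $ l = (\<Sum>i\<in>UNIV. cnj (cj (axis j 1) $ i) * cj (axis i 1) $ l)"
    by (simp only: sum_component vector_smult_component)
  then have "cnj (axis j (1::complex) $ l) = (\<Sum>i\<in>UNIV. cj (axis j 1) $ i * cnj (cj (axis i 1) $ l))"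
    by simp
  then have "(\<Sum>i\<in>UNIV. cj (axis j 1) $ i * cnj (cj (axis i 1) $ l)) = cnj (axis j (1::complex) $ l)"
    by (rule sym)
  also have "\<dots> = (if j = l then 1 else 0)" by (simp add: axis_def)
  finally show ?thesis .
qed

lemma tr_cj: assumes T: "clin T"
  shows "(\<Sum>i\<in>UNIV. cj (T (cj (axis i 1))) $ i) = cnj (tr T)"
proof -
  define c where "c i = cj (axis i 1)" for i
  define t where "t j l = T (axis l 1) $ j" for j l
  have A: "cj (T (axis l 1)) = (\<Sum>j\<in>UNIV. cnj (t j l) *s c j)" for l
    unfolding t_def c_def by (rule cj_expand)
  have B: "T (c i) = (\<Sum>l\<in>UNIV. c i $ l *s T (axis l 1))" for i by (rule clin_expand[OF T])
  have C: "cj (T (c i)) = (\<Sum>l\<in>UNIV. cnj (c i $ l) *s (\<Sum>j\<in>UNIV. cnj (t j l) *s c j))" for i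
    by (simp only: B cj_sum cj_smult A)
  have e1: "cj (T (c i)) $ i = (\<Sum>l\<in>UNIV. \<Sum>j\<in>UNIV. cnj (t j l) * (cnj (c i $ l) * c j $ i))" for i
  proof -
    have "cj (T (c i)) $ i = (\<Sum>l\<in>UNIV. cnj (c i $ l) * (\<Sum>j\<in>UNIV. cnj (t j l) * c j $ i))"
      by (simp only: C sum_component vector_smult_component)
    also have "\<dots> = (\<Sum>l\<in>UNIV. \<Sum>j\<in>UNIV. cnj (t j l) * (cnj (c i $ l) * c j $ i))"
      by (simp only: sum_distrib_left mult.left_commute)
    finally show ?thesis .
  qed
  have O: "(\<Sum>i\<in>UNIV. cnj (t j l) * (cnj (c i $ l) * c j $ i)) = cnj (t j l) * (if j = l then 1 else 0)" for j l
  proof -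
    have "(\<Sum>i\<in>UNIV. cnj (t j l) * (cnj (c i $ l) * c j $ i)) = cnj (t j l) * (\<Sum>i\<in>UNIV. c j $ i * cnj (c i $ l))"
      by (simp add: sum_distrib_left mult_ac)
    also have "\<dots> = cnj (t j l) * (if j = l then 1 else 0)" unfolding c_def by (simp only: cj_orth)
    finally show ?thesis .
  qed
  have "(\<Sum>i\<in>UNIV. cj (T (c i)) $ i) = (\<Sum>i\<in>UNIV. \<Sum>l\<in>UNIV. \<Sum>j\<in>UNIV. cnj (t j l) * (cnj (c i $ l) * c j $ i))"
    by (simp only: e1)
  also have "\<dots> = (\<Sum>l\<in>UNIV. \<Sum>i\<in>UNIV. \<Sum>j\<in>UNIV. cnj (t j l) * (cnj (c i $ l) * c j $ i))"
    by (rule sum.swap)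
  also have "\<dots> = (\<Sum>l\<in>UNIV. \<Sum>j\<in>UNIV. \<Sum>i\<in>UNIV. cnj (t j l) * (cnj (c i $ l) * c j $ i))"
    by (rule sum.cong[OF refl], rule sum.swap)
  also have "\<dots> = (\<Sum>l\<in>UNIV. \<Sum>j\<in>UNIV. cnj (t j l) * (if j = l then 1 else 0))"
    by (simp only: O)
  also have "\<dots> = (\<Sum>l\<in>UNIV. cnj (t l l))"
  proof (rule sum.cong[OF refl])
    fix l
    have "(\<Sum>j\<in>UNIV. cnj (t j l) * (if j = l then 1 else 0)) = (\<Sum>j\<in>UNIV. if j = l then cnj (t j l) else 0)"
      by (rule sum.cong) auto
    also have "\<dots> = cnj (t l l)" by (simp add: sum.delta')
    finally show "(\<Sum>j\<in>UNIV. cnj (t j l) * (if j = l then 1 else 0)) = cnj (t l l)" .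
  qed
  also have "\<dots> = cnj (tr T)" by (simp add: tr_def t_def)
  finally show ?thesis unfolding c_def .
qed

lemma killing_cj: "killing br (cj x) (cj y) = cnj (killing br x y)"
proof -
  have "killing br (cj x) (cj y) = (\<Sum>i\<in>UNIV. br (cj x) (br (cj y) (cj (cj (axis i 1)))) $ i)"
    by (simp add: killing_def)
  also have "\<dots> = (\<Sum>i\<in>UNIV. cj (br x (br y (cj (axis i 1)))) $ i)"
    by (simp add: cj_br)
  also have "\<dots> = cnj (tr (\<lambda>z. br x (br y z)))" by (rule tr_cj[OF clin_br2])
  finally show ?thesis by (simp add: killing_tr)
qed

end
context LB begin

lemma killing_diffR: "killing br z (x - y) = killing br z x - killing br z y"
  by (simp add: killing_def br_diffL br_diffR sum_subtractf)
lemma killing_diffL: "killing br (x - y) z = killing br x z - killing br y z"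
  by (simp add: killing_def br_diffL sum_subtractf)

definition h :: "complex^'n \<Rightarrow> complex^'n \<Rightarrow> complex" where
  "h x y = killing br x (cj y)"

lemma h_herm: "h y x = cnj (h x y)"
proof -
  have "killing br y (cj x) = killing br (cj x) (cj (cj y))" by (simp add: killing_sym)
  also have "\<dots> = cnj (killing br x (cj y))" by (rule killing_cj)
  finally show ?thesis unfolding h_def .
qed
lemma h_real: "h x x = of_real (Re (h x x))"
  using h_herm[of x x] by (simp add: complex_eq_iff)
lemma h_addL: "h (x + y) z = h x z + h y z" by (simp add: h_def killing_addL)
lemma h_addR: "h z (x + y) = h z x + h z y" by (simp add: h_def killing_addR cj_add)
lemma h_smultL: "h (c *s x) z = c * h x z" by (simp add: h_def killing_smultL)
lemma h_smultR: "h z (c *s x) = cnj c * h z x" by (simp add: h_def killing_smultR cj_smult)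
lemma h_zeroL[simp]: "h 0 z = 0" by (metis h_smultL mult_zero_left vector_smult_lzero)
lemma h_zeroR[simp]: "h z 0 = 0" by (metis h_smultR complex_cnj_zero mult_zero_left vector_smult_lzero)
lemma h_negL: "h (- x) z = - h x z" by (metis add.right_inverse add_eq_0_iff h_addL h_zeroL)
lemma h_negR: "h z (- x) = - h z x" by (metis add.right_inverse add_eq_0_iff h_addR h_zeroR)
lemma h_diffL: "h (x - y) z = h x z - h y z" by (simp only: diff_conv_add_uminus h_addL h_negL)
lemma h_diffR: "h z (x - y) = h z x - h z y" by (simp only: diff_conv_add_uminus h_addR h_negR)
lemma h_sumL: "h (\<Sum>i\<in>A. f i) z = (\<Sum>i\<in>A. h (f i) z)"
  by (induction A rule: infinite_finite_induct) (auto simp: h_addL)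
lemma h_sumR: "h z (\<Sum>i\<in>A. f i) = (\<Sum>i\<in>A. h z (f i))"
  by (induction A rule: infinite_finite_induct) (auto simp: h_addR)

end

locale BSD = LB br cj for br :: "complex^'n \<Rightarrow> complex^'n \<Rightarrow> complex^'n" and cj +
  fixes L P :: "(complex^'n) set" and H0 :: "complex^'n"
  assumes bsd: "bsd_data br cj L P H0"
begin

lemma subP: "vec.subspace P" using bsd by (simp add: bsd_data_def)
lemma subL: "vec.subspace L" using bsd by (simp add: bsd_data_def)
lemma cjP: "x \<in> P \<Longrightarrow> cj x \<in> P" using bsd by (auto simp: bsd_data_def)
lemma posP: "x \<in> P \<Longrightarrow> cj x = x \<Longrightarrow> x \<noteq> 0 \<Longrightarrow> Re (killing br x x) > 0"
  using bsd by (auto simp: bsd_data_def)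
lemma PP: "x \<in> P \<Longrightarrow> y \<in> P \<Longrightarrow> br x y \<in> L" using bsd by (auto simp: bsd_data_def)
lemma LP: "x \<in> L \<Longrightarrow> y \<in> P \<Longrightarrow> br x y \<in> P" using bsd by (auto simp: bsd_data_def)
lemma H0L: "x \<in> L \<Longrightarrow> br H0 x = 0" using bsd by (auto simp: bsd_data_def)

lemma h_pos: assumes "x \<in> P" "x \<noteq> 0" shows "Re (h x x) > 0"
proof -
  define a where "a = (1/2) *s (x + cj x)"
  define b where "b = (- \<i>/2) *s (x - cj x)"
  have xab: "x = a + \<i> *s b" unfolding a_def b_def
    by (simp add: vec_eq_iff field_simps)
  have ca: "cj a = a" unfolding a_def by (simp add: cj_smult cj_add add.commute)
  have cb: "cj b = b" unfolding b_def
    by (simp add: cj_smult cj_diff vec_eq_iff field_simps)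
  have aP: "a \<in> P" unfolding a_def using subP cjP[OF assms(1)] assms(1)
    by (simp add: vec.subspace_add vec.subspace_scale)
  have bP: "b \<in> P" unfolding b_def using subP cjP[OF assms(1)] assms(1)
    by (simp add: vec.subspace_diff vec.subspace_scale)
  have "h x x = killing br (a + \<i> *s b) (a - \<i> *s b)"
    unfolding h_def xab by (simp add: cj_add cj_smult ca cb)
  also have "\<dots> = killing br a a + killing br b b"
    by (simp add: killing_addL killing_diffR killing_smultL killing_smultR killing_sym[of b a]
      algebra_simps)
  finally have eq: "h x x = killing br a a + killing br b b" .
  have ne: "a \<noteq> 0 \<or> b \<noteq> 0" using xab assms(2) by auto
  have "Re (killing br a a) \<ge> 0" using posP[OF aP ca] by (cases "a = 0") (auto simp: killing_def)
  moreover have "Re (killing br b b) \<ge> 0" using posP[OF bP cb] by (cases "b = 0") (auto simp: killing_def)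
  ultimately show ?thesis using eq ne posP[OF aP ca] posP[OF bP cb] by auto
qed

end
context LB begin

definition orthonormal :: "nat \<Rightarrow> (nat \<Rightarrow> complex^'n) \<Rightarrow> bool" where
  "orthonormal p e \<longleftrightarrow> (\<forall>j<p. \<forall>k<p. h (e j) (e k) = (if j = k then 1 else 0))"

lemma unitary_basis_iff: "unitary_basis br cj S p e \<longleftrightarrow> vec.span (e ` {..<p}) = S \<and> orthonormal p e"
  by (simp add: unitary_basis_def orthonormal_def h_def)

lemma span_sum_ex:
  fixes e :: "nat \<Rightarrow> complex^'n"
  assumes "y \<in> vec.span (e ` {..<p})"
  shows "\<exists>c. y = (\<Sum>j<p. c j *s e j)"
proof -
  let ?Q = "{y. \<exists>c. y = (\<Sum>j<p. c j *s e j)}"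
  have sQ: "vec.subspace ?Q"
    unfolding vec.subspace_def
  proof (intro conjI ballI allI)
    show "0 \<in> ?Q" by (rule CollectI, rule exI[of _ "\<lambda>_. 0"]) simp
  next
    fix x y assume "x \<in> ?Q" "y \<in> ?Q"
    then obtain a b where "x = (\<Sum>j<p. a j *s e j)" "y = (\<Sum>j<p. b j *s e j)" by blast
    then have xy: "x + y = (\<Sum>j<p. (a j + b j) *s e j)"
      by (simp add: sum.distrib vector_sadd_rdistrib)
    show "x + y \<in> ?Q" by (rule CollectI, rule exI[where x="\<lambda>j. a j + b j"]) (simp add: xy)
  next
    fix c :: complex and x assume "x \<in> ?Q"
    then obtain a where "x = (\<Sum>j<p. a j *s e j)" by blast
    then have cx: "c *s x = (\<Sum>j<p. (c * a j) *s e j)"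
      by (simp add: vec_eq_iff sum_distrib_left mult.assoc)
    show "c *s x \<in> ?Q" by (rule CollectI, rule exI[where x="\<lambda>j. c * a j"]) (simp add: cx)
  qed
  have "x \<in> ?Q" if "x \<in> e ` {..<p}" for x
  proof -
    from that obtain i where i: "i < p" "x = e i" by blast
    have "(\<Sum>j<p. (if j = i then 1 else 0) *s e j) = (\<Sum>j<p. if j = i then e j else 0)"
      by (rule sum.cong) auto
    also have "\<dots> = e i" using i by (simp add: sum.delta')
    finally have "e i = (\<Sum>j<p. (if j = i then 1 else 0) *s e j)" by simp
    then show ?thesis using i by (intro CollectI exI[where x="\<lambda>j. if j = i then 1 else 0"]) simp
  qed
  then have "y \<in> ?Q" using vec.span_induct[OF assms sQ] by blast
  then show ?thesis by (simp only: mem_Collect_eq)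
qed

lemma sum_in_span: "(\<Sum>j<p. c j *s e j) \<in> vec.span (e ` {..<p})" for e :: "nat \<Rightarrow> complex^'n"
  by (intro vec.span_sum vec.span_scale vec.span_base) auto

lemma coeff_orth:
  assumes "orthonormal p e" "l < p"
  shows "h (\<Sum>j<p. c j *s e j) (e l) = c l"
proof -
  have "h (\<Sum>j<p. c j *s e j) (e l) = (\<Sum>j<p. c j * h (e j) (e l))"
    by (simp add: h_sumL h_smultL)
  also have "\<dots> = (\<Sum>j<p. if j = l then c j else 0)"
    using assms by (intro sum.cong) (auto simp: orthonormal_def)
  also have "\<dots> = c l" using assms(2) by (simp add: sum.delta')
  finally show ?thesis .
qed

lemma expand:
  assumes "orthonormal p e" "y \<in> vec.span (e ` {..<p})"
  shows "y = (\<Sum>j<p. h y (e j) *s e j)"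
proof -
  obtain c where c: "y = (\<Sum>j<p. c j *s e j)" using span_sum_ex[OF assms(2)] by blast
  have hc: "h y (e j) = c j" if "j < p" for j using coeff_orth[OF assms(1) that] c by simp
  have "(\<Sum>j<p. h y (e j) *s e j) = (\<Sum>j<p. c j *s e j)"
    by (rule sum.cong[OF refl]) (simp add: hc)
  then show ?thesis using c by simp
qed

lemma sigma_indep:
  assumes e: "orthonormal p e" and f: "orthonormal p f"
    and sp: "vec.span (f ` {..<p}) = vec.span (e ` {..<p})"
  shows "(\<Sum>k<p. br (f k) (cj (f k))) = (\<Sum>k<p. br (e k) (cj (e k)))"
proof -
  define a where "a k j = h (f k) (e j)" for k j
  have fk: "f k = (\<Sum>j<p. a k j *s e j)" if "k < p" for k
    unfolding a_def by (rule expand[OF e]) (use sp that in \<open>auto intro: vec.span_base\<close>)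
  have el: "e l = (\<Sum>k<p. h (e l) (f k) *s f k)" if "l < p" for l
    by (rule expand[OF f]) (use sp that in \<open>auto intro: vec.span_base\<close>)
  have delta: "(\<Sum>k<p. a k j * cnj (a k l)) = (if j = l then 1 else 0)" if "j < p" "l < p" for j l
  proof -
    have "(\<Sum>k<p. a k j * cnj (a k l)) = (\<Sum>k<p. h (e l) (f k) * h (f k) (e j))"
      unfolding a_def by (intro sum.cong refl) (simp add: h_herm[of "e l"] mult.commute)
    also have "\<dots> = h (\<Sum>k<p. h (e l) (f k) *s f k) (e j)" by (simp add: h_sumL h_smultL)
    also have "\<dots> = h (e l) (e j)" using el[OF that(2)] by simp
    also have "\<dots> = (if j = l then 1 else 0)" using e that unfolding orthonormal_def by auto
    finally show ?thesis .
  qed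
  have bk: "br (f k) (cj (f k)) = (\<Sum>j<p. \<Sum>l<p. (a k j * cnj (a k l)) *s br (e j) (cj (e l)))"
    if "k < p" for k
  proof -
    have "br (f k) (cj (f k)) = br (\<Sum>j<p. a k j *s e j) (\<Sum>l<p. cnj (a k l) *s cj (e l))"
      by (simp only: fk[OF that] cj_sum cj_smult)
    also have "\<dots> = (\<Sum>l<p. \<Sum>j<p. (a k j * cnj (a k l)) *s br (e j) (cj (e l)))"
      by (simp add: br_sumL br_sumR br_smultL br_smultR vec.scale_sum_right vector_smult_assoc mult.commute)
    also have "\<dots> = (\<Sum>j<p. \<Sum>l<p. (a k j * cnj (a k l)) *s br (e j) (cj (e l)))"
      by (rule sum.swap)
    finally show ?thesis .
  qed
  have "(\<Sum>k<p. br (f k) (cj (f k))) = (\<Sum>k<p. \<Sum>j<p. \<Sum>l<p. (a k j * cnj (a k l)) *s br (e j) (cj (e l)))"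
    by (rule sum.cong[OF refl]) (simp add: bk)
  also have "\<dots> = (\<Sum>j<p. \<Sum>k<p. \<Sum>l<p. (a k j * cnj (a k l)) *s br (e j) (cj (e l)))"
    by (rule sum.swap)
  also have "\<dots> = (\<Sum>j<p. \<Sum>l<p. \<Sum>k<p. (a k j * cnj (a k l)) *s br (e j) (cj (e l)))"
    by (rule sum.cong[OF refl], rule sum.swap)
  also have "\<dots> = (\<Sum>j<p. \<Sum>l<p. (\<Sum>k<p. a k j * cnj (a k l)) *s br (e j) (cj (e l)))"
    by (simp add: vec.scale_sum_left)
  also have "\<dots> = (\<Sum>j<p. \<Sum>l<p. (if j = l then 1 else 0) *s br (e j) (cj (e l)))"
    by (intro sum.cong refl) (simp add: delta)
  also have "\<dots> = (\<Sum>j<p. br (e j) (cj (e j)))"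
  proof (rule sum.cong[OF refl])
    fix j assume j: "j \<in> {..<p}"
    have "(\<Sum>l<p. (if j = l then 1 else 0) *s br (e j) (cj (e l))) = (\<Sum>l<p. if j = l then br (e j) (cj (e l)) else 0)"
      by (rule sum.cong) auto
    also have "\<dots> = br (e j) (cj (e j))" using j by (simp add: sum.delta)
    finally show "(\<Sum>l<p. (if j = l then 1 else 0) *s br (e j) (cj (e l))) = br (e j) (cj (e j))" .
  qed
  finally show ?thesis .
qed

lemma Sigma_eq:
  assumes "vec.dim S = p" "orthonormal p e" "vec.span (e ` {..<p}) = S"
  shows "Sigma br cj S = \<i> *s (\<Sum>k<p. br (e k) (cj (e k)))"
proof -
  have ex: "\<exists>e. unitary_basis br cj S p e" using assms unitary_basis_iff by blast
  define f where "f = (SOME e. unitary_basis br cj S p e)"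
  have f: "unitary_basis br cj S p f" unfolding f_def using someI_ex[OF ex] .
  have "Sigma br cj S = \<i> *s (\<Sum>k<p. br (f k) (cj (f k)))"
    unfolding Sigma_def Let_def assms(1) f_def ..
  also have "\<dots> = \<i> *s (\<Sum>k<p. br (e k) (cj (e k)))"
    using sigma_indep[OF assms(2)] f assms(3) unfolding unitary_basis_iff by simp
  finally show ?thesis .
qed

end

definition nrm :: "(complex^'n \<Rightarrow> complex^'n \<Rightarrow> complex) \<Rightarrow> complex^'n \<Rightarrow> complex^'n" where
  "nrm hh u = complex_of_real (1 / sqrt (Re (hh u u))) *s u"

fun gs :: "(complex^'n \<Rightarrow> complex^'n \<Rightarrow> complex) \<Rightarrow> (nat \<Rightarrow> complex^'n) \<Rightarrow> nat \<Rightarrow> nat \<Rightarrow> complex^'n" where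
  "gs hh w 0 = (\<lambda>_. 0)"
| "gs hh w (Suc k) = (gs hh w k)(k := nrm hh (w k - (\<Sum>j<k. hh (w k) (gs hh w k j) *s gs hh w k j)))"

lemma gs_stable: "j < k \<Longrightarrow> gs hh w (Suc k) j = gs hh w k j" by simp

context BSD begin

lemma P_sum: "(\<And>j. j \<in> A \<Longrightarrow> f j \<in> P) \<Longrightarrow> (\<Sum>j\<in>A. f j) \<in> P"
  using subP by (simp add: vec.subspace_sum)

lemma gs_props:
  assumes wP: "\<forall>j<p. w j \<in> P" and ind: "vec.independent (w ` {..<p})" and inj: "inj_on w {..<p}"
    and "k \<le> p"
  shows "orthonormal k (gs h w k) \<and> vec.span (gs h w k ` {..<k}) = vec.span (w ` {..<k})
         \<and> (\<forall>j<k. gs h w k j \<in> P)"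
  using assms(4)
proof (induction k)
  case 0 then show ?case by (simp add: orthonormal_def)
next
  case (Suc k)
  then have kp: "k < p" by simp
  define e where "e = gs h w k"
  have IH: "orthonormal k e" "vec.span (e ` {..<k}) = vec.span (w ` {..<k})" "\<forall>j<k. e j \<in> P"
    using Suc.IH kp unfolding e_def by auto
  define u where "u = w k - (\<Sum>j<k. h (w k) (e j) *s e j)"
  have gsS: "gs h w (Suc k) = e(k := nrm h u)" by (simp add: e_def u_def)
  have uP: "u \<in> P" unfolding u_def using IH(3) wP kp subP
    by (intro vec.subspace_diff P_sum vec.subspace_scale) auto
  have sum_span: "(\<Sum>j<k. h (w k) (e j) *s e j) \<in> vec.span (w ` {..<k})"
    using sum_in_span[where c="\<lambda>j. h (w k) (e j)" and p=k and e=e] IH(2) by simp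
  have u0: "u \<noteq> 0"
  proof
    assume "u = 0"
    then have "w k = (\<Sum>j<k. h (w k) (e j) *s e j)" unfolding u_def by simp
    then have wk: "w k \<in> vec.span (w ` {..<k})" using sum_span by simp
    have "w ` {..<k} \<subseteq> w ` {..<p} - {w k}" using inj kp by (auto simp: inj_on_def)
    then have "w k \<in> vec.span (w ` {..<p} - {w k})" using wk vec.span_mono by blast
    then have "vec.dependent (w ` {..<p})" unfolding vec.dependent_def using kp by blast
    then show False using ind by simp
  qed
  have hpos: "Re (h u u) > 0" by (rule h_pos[OF uP u0])
  define c where "c = 1 / sqrt (Re (h u u))"
  have nu: "nrm h u = complex_of_real c *s u" by (simp add: nrm_def c_def)
  have orth_u: "h u (e j) = 0" if "j < k" for j
  proof -
    have "h u (e j) = h (w k) (e j) - h (\<Sum>l<k. h (w k) (e l) *s e l) (e j)"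
      unfolding u_def by (rule h_diffL)
    also have "h (\<Sum>l<k. h (w k) (e l) *s e l) (e j) = h (w k) (e j)"
      by (rule coeff_orth[OF IH(1) that])
    finally show ?thesis by simp
  qed
  have huu: "h (nrm h u) (nrm h u) = 1"
  proof -
    have "h (nrm h u) (nrm h u) = complex_of_real (c * c) * h u u"
      by (simp add: nu h_smultL h_smultR)
    also have "\<dots> = complex_of_real (c * c * Re (h u u))" by (subst h_real) simp
    also have "c * c * Re (h u u) = 1" using hpos by (simp add: c_def)
    finally show ?thesis by simp
  qed
  have orth_n1: "h (nrm h u) (e j) = 0" if "j < k" for j
    by (simp add: nu h_smultL orth_u[OF that])
  have orth_n2: "h (e j) (nrm h u) = 0" if "j < k" for j
    by (subst h_herm) (simp add: orth_n1[OF that])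
  have on: "orthonormal (Suc k) (gs h w (Suc k))"
    unfolding orthonormal_def gsS
  proof (intro allI impI)
    fix i j assume i: "i < Suc k" and j: "j < Suc k"
    show "h ((e(k := nrm h u)) i) ((e(k := nrm h u)) j) = (if i = j then 1 else 0)"
    proof (cases "i = k"; cases "j = k")
      assume "i = k" "j = k" then show ?thesis by (simp add: huu)
    next
      assume "i = k" "j \<noteq> k" then show ?thesis using j orth_n1[of j] by simp
    next
      assume "i \<noteq> k" "j = k" then show ?thesis using i orth_n2[of i] by simp
    next
      assume "i \<noteq> k" "j \<noteq> k" then show ?thesis using i j IH(1) unfolding orthonormal_def by simp
    qed
  qed
  have img: "gs h w (Suc k) ` {..<Suc k} = insert (nrm h u) (e ` {..<k})"
    unfolding gsS lessThan_Suc by auto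
  have imgw: "w ` {..<Suc k} = insert (w k) (w ` {..<k})"
    unfolding lessThan_Suc by auto
  have sp: "vec.span (insert (nrm h u) (e ` {..<k})) = vec.span (insert (w k) (w ` {..<k}))"
    unfolding vec.span_eq
  proof (intro conjI)
    have s2: "(\<Sum>j<k. h (w k) (e j) *s e j) \<in> vec.span (insert (w k) (w ` {..<k}))"
      by (rule subsetD[OF vec.span_mono sum_span]) auto
    have "u \<in> vec.span (insert (w k) (w ` {..<k}))"
      unfolding u_def by (rule vec.span_diff[OF vec.span_base[OF insertI1] s2])
    then have "nrm h u \<in> vec.span (insert (w k) (w ` {..<k}))"
      unfolding nu by (rule vec.span_scale)
    moreover have "e ` {..<k} \<subseteq> vec.span (insert (w k) (w ` {..<k}))"
      using IH(2) vec.span_superset[of "e ` {..<k}"] vec.span_mono[of "w ` {..<k}" "insert (w k) (w ` {..<k})"]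
      by auto
    ultimately show "insert (nrm h u) (e ` {..<k}) \<subseteq> vec.span (insert (w k) (w ` {..<k}))" by blast
  next
    have cne: "c \<noteq> 0" using hpos by (simp add: c_def)
    have "u = complex_of_real (1 / c) *s nrm h u" using cne by (simp add: nu)
    then have uin: "u \<in> vec.span (insert (nrm h u) (e ` {..<k}))"
      by (metis vec.span_scale vec.span_base insertI1)
    have sin: "(\<Sum>j<k. h (w k) (e j) *s e j) \<in> vec.span (insert (nrm h u) (e ` {..<k}))"
      by (rule subsetD[OF vec.span_mono sum_in_span]) auto
    have "w k = u + (\<Sum>j<k. h (w k) (e j) *s e j)" unfolding u_def by simp
    then have "w k \<in> vec.span (insert (nrm h u) (e ` {..<k}))"
      using vec.span_add[OF uin sin] by simp
    moreover have "w ` {..<k} \<subseteq> vec.span (insert (nrm h u) (e ` {..<k}))"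
      using IH(2) vec.span_superset[of "w ` {..<k}"] vec.span_mono[of "e ` {..<k}" "insert (nrm h u) (e ` {..<k})"]
      by auto
    ultimately show "insert (w k) (w ` {..<k}) \<subseteq> vec.span (insert (nrm h u) (e ` {..<k}))" by blast
  qed
  have inP: "\<forall>j<Suc k. gs h w (Suc k) j \<in> P"
    using IH(3) uP subP unfolding gsS nu by (auto simp: less_Suc_eq vec.subspace_scale)
  have "vec.span (gs h w (Suc k) ` {..<Suc k}) = vec.span (w ` {..<Suc k})"
    by (simp only: img imgw sp)
  then show ?case using on inP by blast
qed

end

lemma scaleR_s: "r *\<^sub>R (x::complex^'n) = complex_of_real r *s x"
proof -
  have "(r *\<^sub>R x) $ i = (complex_of_real r *s x) $ i" for i
    by (simp add: scaleR_conv_of_real[where 'a=complex])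
  then show ?thesis by (simp add: vec_eq_iff)
qed

lemma bb_sm: "bounded_bilinear (\<lambda>(c::complex) (x::complex^'n). c *s x)"
  unfolding bilinear_conv_bounded_bilinear[symmetric] bilinear_def
  by (auto intro!: linearI simp: scaleR_s vector_add_ldistrib vector_sadd_rdistrib vector_smult_assoc scaleR_conv_of_real)

context LB begin

lemma bb_br: "bounded_bilinear br"
  unfolding bilinear_conv_bounded_bilinear[symmetric] bilinear_def
  by (auto intro!: linearI simp: scaleR_s br_addL br_addR br_smultL br_smultR)

lemma bl_cj: "bounded_linear cj"
  unfolding linear_conv_bounded_linear[symmetric]
  by (auto intro!: linearI simp: scaleR_s cj_add cj_smult)

lemma bb_h: "bounded_bilinear h"
  unfolding bilinear_conv_bounded_bilinear[symmetric] bilinear_def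
  by (auto intro!: linearI simp: scaleR_s scaleR_conv_of_real h_addL h_addR h_smultL h_smultR)

lemma bb_K: "bounded_bilinear (killing br)"
  unfolding bilinear_conv_bounded_bilinear[symmetric] bilinear_def
  by (auto intro!: linearI simp: scaleR_s scaleR_conv_of_real killing_addL killing_addR killing_smultL killing_smultR)

end

context BSD begin

lemma gs_pos:
  assumes wP: "\<forall>j<p. w j \<in> P" and ind: "vec.independent (w ` {..<p})" and inj: "inj_on w {..<p}"
    and kp: "k < p"
  shows "Re (h (w k - (\<Sum>j<k. h (w k) (gs h w k j) *s gs h w k j))
                 (w k - (\<Sum>j<k. h (w k) (gs h w k j) *s gs h w k j))) > 0"
proof -
  define u where "u = w k - (\<Sum>j<k. h (w k) (gs h w k j) *s gs h w k j)"
  have "orthonormal (Suc k) (gs h w (Suc k))" using gs_props[OF wP ind inj, of "Suc k"] kp by simp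
  then have o: "\<forall>j<Suc k. \<forall>l<Suc k. h (gs h w (Suc k) j) (gs h w (Suc k) l) = (if j = l then 1 else 0)"
    unfolding orthonormal_def .
  have "h (gs h w (Suc k) k) (gs h w (Suc k) k) = 1" using o[rule_format, OF lessI lessI] by simp
  then have "h (nrm h u) (nrm h u) = 1" by (simp add: u_def)
  then have "complex_of_real (1 / sqrt (Re (h u u))) * (complex_of_real (1 / sqrt (Re (h u u))) * h u u) = 1"
    by (simp only: nrm_def h_smultL h_smultR complex_cnj_complex_of_real)
  then have "complex_of_real (1 / sqrt (Re (h u u))) * (complex_of_real (1 / sqrt (Re (h u u))) * complex_of_real (Re (h u u))) = 1"
    by (subst (asm) h_real)
  then have "complex_of_real (1 / sqrt (Re (h u u)) * (1 / sqrt (Re (h u u))) * Re (h u u)) = 1"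
    by (simp only: of_real_mult mult.assoc)
  then have e: "1 / sqrt (Re (h u u)) * (1 / sqrt (Re (h u u))) * Re (h u u) = 1"
    using of_real_eq_1_iff by blast
  have s0: "1 / sqrt (Re (h u u)) * (1 / sqrt (Re (h u u))) \<ge> 0" by simp
  have "Re (h u u) > 0"
  proof (rule ccontr)
    assume "\<not> Re (h u u) > 0"
    then have "Re (h u u) \<le> 0" by simp
    then have "1 / sqrt (Re (h u u)) * (1 / sqrt (Re (h u u))) * Re (h u u) \<le> 0"
      by (rule mult_nonneg_nonpos[OF s0])
    then show False using e by simp
  qed
  then show ?thesis unfolding u_def .
qed

lemma gs_deriv:
  assumes wP: "\<forall>t. \<forall>j<p. w t j \<in> P" and ind: "\<forall>t. vec.independent (w t ` {..<p})"
    and inj: "\<forall>t. inj_on (w t) {..<p}"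
    and dif: "\<forall>j<p. \<exists>d. ((\<lambda>t. w t j) has_vector_derivative d) (at 0)"
    and "k \<le> p"
  shows "\<forall>j<k. \<exists>d. ((\<lambda>t. gs h (w t) k j) has_vector_derivative d) (at 0)"
  using assms(5)
proof (induction k)
  case 0 then show ?case by simp
next
  case (Suc k)
  then have kp: "k < p" by simp
  have IH: "\<forall>j\<in>{..<k}. \<exists>d. ((\<lambda>t. gs h (w t) k j) has_vector_derivative d) (at 0)"
    using Suc by auto
  obtain D where D: "\<forall>j\<in>{..<k}. ((\<lambda>t. gs h (w t) k j) has_vector_derivative D j) (at 0)"
    using bchoice[OF IH] by blast
  obtain dw where dw: "((\<lambda>t. w t k) has_vector_derivative dw) (at 0)" using dif kp by blast
  define u where "u t = w t k - (\<Sum>j<k. h (w t k) (gs h (w t) k j) *s gs h (w t) k j)" for t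
  have hd: "((\<lambda>t. h (w t k) (gs h (w t) k j)) has_vector_derivative
             (h (w 0 k) (D j) + h dw (gs h (w 0) k j))) (at 0)" if "j < k" for j
    using bounded_bilinear.has_vector_derivative[OF bb_h dw D[rule_format, of j]] that by simp
  have sd: "((\<lambda>t. h (w t k) (gs h (w t) k j) *s gs h (w t) k j) has_vector_derivative
     (h (w 0 k) (gs h (w 0) k j) *s D j + (h (w 0 k) (D j) + h dw (gs h (w 0) k j)) *s gs h (w 0) k j)) (at 0)"
    if "j < k" for j
    using bounded_bilinear.has_vector_derivative[OF bb_sm hd[OF that] D[rule_format, of j]] that by simp
  have ud: "\<exists>d. (u has_vector_derivative d) (at 0)"
    unfolding u_def
    by (rule exI, rule has_vector_derivative_diff[OF dw has_vector_derivative_sum], rule sd) simp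
  then obtain du where du: "(u has_vector_derivative du) (at 0)" by blast
  have gd: "((\<lambda>t. Re (h (u t) (u t))) has_real_derivative Re (h (u 0) du + h du (u 0))) (at 0)"
    unfolding has_real_derivative_iff_has_vector_derivative
    using bounded_linear.has_vector_derivative[OF bounded_linear_Re
        bounded_bilinear.has_vector_derivative[OF bb_h du du]] by simp
  have pos: "Re (h (u 0) (u 0)) > 0"
    unfolding u_def using gs_pos[of p "w 0"] wP ind inj kp by simp
  have sq: "((\<lambda>t. sqrt (Re (h (u t) (u t)))) has_real_derivative
       inverse (sqrt (Re (h (u 0) (u 0)))) / 2 * Re (h (u 0) du + h du (u 0))) (at 0)"
    by (rule DERIV_chain2[OF DERIV_real_sqrt[OF pos] gd])
  have sq0: "sqrt (Re (h (u 0) (u 0))) \<noteq> 0" using pos by simp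
  obtain dc where dc: "((\<lambda>t. 1 / sqrt (Re (h (u t) (u t)))) has_real_derivative dc) (at 0)"
    using DERIV_divide[OF DERIV_const sq sq0] by blast
  have cd: "((\<lambda>t. complex_of_real (1 / sqrt (Re (h (u t) (u t))))) has_vector_derivative complex_of_real dc) (at 0)"
    by (rule has_vector_derivative_of_real[OF dc])
  have nd: "\<exists>d. ((\<lambda>t. nrm h (u t)) has_vector_derivative d) (at 0)"
    unfolding nrm_def using bounded_bilinear.has_vector_derivative[OF bb_sm cd du] by blast
  show ?case
  proof (intro allI impI)
    fix j assume j: "j < Suc k"
    show "\<exists>d. ((\<lambda>t. gs h (w t) (Suc k) j) has_vector_derivative d) (at 0)"
    proof (cases "j = k")
      case True
      have "(\<lambda>t. gs h (w t) (Suc k) j) = (\<lambda>t. nrm h (u t))" using True by (simp add: u_def)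
      then show ?thesis using nd by simp
    next
      case False
      then have "j < k" using j by simp
      then show ?thesis using D by auto
    qed
  qed
qed

end

context LB begin

lemma killing_negR: "killing br z (- x) = - killing br z x"
  by (simp add: killing_def br_negL br_negR sum_negf)
lemma killing_sumL: "killing br (\<Sum>i\<in>A. f i) z = (\<Sum>i\<in>A. killing br (f i) z)"
proof (induction A rule: infinite_finite_induct)
  case (insert x F) then show ?case by (simp add: killing_addL)
qed (simp_all add: killing_def)

lemma cj_sig1: "cj (\<i> *s (\<Sum>k<p. br (a k) (cj (a k)))) = \<i> *s (\<Sum>k<p. br (a k) (cj (a k)))"
proof -
  have "cj (\<Sum>k<p. br (a k) (cj (a k))) = (\<Sum>k<p. br (cj (a k)) (a k))"
    by (simp add: cj_sum cj_br)
  also have "\<dots> = (\<Sum>k<p. - br (a k) (cj (a k)))"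
    by (rule sum.cong[OF refl]) (rule br_anti)
  also have "\<dots> = - (\<Sum>k<p. br (a k) (cj (a k)))" by (simp add: sum_negf)
  finally have e: "cj (\<Sum>k<p. br (a k) (cj (a k))) = - (\<Sum>k<p. br (a k) (cj (a k)))" .
  show ?thesis by (simp only: cj_smult e complex_cnj_i vector_smult_lneg vector_smult_rneg minus_minus)
qed

lemma cj_sig2: "cj (\<i> *s (\<Sum>k<p. br (a k) (cj (b k)) + br (b k) (cj (a k))))
   = \<i> *s (\<Sum>k<p. br (a k) (cj (b k)) + br (b k) (cj (a k)))"
proof -
  have "cj (\<Sum>k<p. br (a k) (cj (b k)) + br (b k) (cj (a k))) = (\<Sum>k<p. br (cj (a k)) (b k) + br (cj (b k)) (a k))"
    by (simp add: cj_sum cj_br cj_add)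
  also have "\<dots> = (\<Sum>k<p. - (br (a k) (cj (b k)) + br (b k) (cj (a k))))"
    by (rule sum.cong[OF refl]) (simp add: br_anti[of "cj (a k)" "b k" for k] br_anti[of "cj (b k)" "a k" for k])
  also have "\<dots> = - (\<Sum>k<p. br (a k) (cj (b k)) + br (b k) (cj (a k)))" by (simp only: sum_negf)
  finally have e: "cj (\<Sum>k<p. br (a k) (cj (b k)) + br (b k) (cj (a k))) = - (\<Sum>k<p. br (a k) (cj (b k)) + br (b k) (cj (a k)))" .
  show ?thesis by (simp only: cj_smult e complex_cnj_i vector_smult_lneg vector_smult_rneg minus_minus)
qed

lemma t1: assumes cX: "cj X = X" shows "killing br (br a (cj b)) X = - h a (br X b)"
proof -
  have "killing br (br a (cj b)) X = killing br a (br (cj b) X)" by (rule killing_inv)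
  also have "br (cj b) X = - br X (cj b)" by (rule br_anti)
  also have "br X (cj b) = cj (br X b)" using cX by (simp add: cj_br)
  finally show ?thesis by (simp add: killing_negR h_def)
qed

lemma skew: assumes cX: "cj X = X" shows "h x (br X y) = - h (br X x) y"
proof -
  have "h x (br X y) = killing br x (br X (cj y))" using cX by (simp add: h_def cj_br)
  also have "br X (cj y) = - br (cj y) X" by (rule br_anti)
  also have "killing br x (- br (cj y) X) = - killing br x (br (cj y) X)" by (rule killing_negR)
  also have "killing br x (br (cj y) X) = killing br (br x (cj y)) X" by (rule killing_inv[symmetric])
  also have "\<dots> = killing br X (br x (cj y))" by (rule killing_sym)
  also have "\<dots> = killing br (br X x) (cj y)" by (rule killing_inv[symmetric])
  finally show ?thesis by (simp add: h_def)
qed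

lemma key:
  assumes on: "orthonormal p e" and cX: "cj X = X"
    and inv: "\<forall>k<p. br X (e k) \<in> vec.span (e ` {..<p})"
    and dd: "\<forall>k<p. \<forall>j<p. h (d k) (e j) + h (e k) (d j) = 0"
  shows "killing br (\<Sum>k<p. br (e k) (cj (d k)) + br (d k) (cj (e k))) X = 0"
proof -
  define c where "c k j = h (br X (e k)) (e j)" for k j
  have ex: "br X (e k) = (\<Sum>j<p. c k j *s e j)" if "k < p" for k
    unfolding c_def by (rule expand[OF on]) (use inv that in blast)
  have ca: "c k j = - cnj (c j k)" if "k < p" "j < p" for k j
  proof -
    have "c k j = - h (e k) (br X (e j))" unfolding c_def by (simp add: skew[OF cX])
    also have "h (e k) (br X (e j)) = (\<Sum>l<p. cnj (c j l) * h (e k) (e l))"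
      by (simp add: ex[OF that(2)] h_sumR h_smultR)
    also have "\<dots> = (\<Sum>l<p. if l = k then cnj (c j l) else 0)"
      using on that unfolding orthonormal_def by (intro sum.cong) auto
    also have "\<dots> = cnj (c j k)" using that by (simp add: sum.delta')
    finally show ?thesis .
  qed
  define A where "A k j = cnj (c k j) * h (d k) (e j)" for k j
  have trm: "killing br (br (e k) (cj (d k)) + br (d k) (cj (e k))) X
      = (\<Sum>j<p. c k j * h (e j) (d k)) - (\<Sum>j<p. A k j)" if "k < p" for k
  proof -
    have "killing br (br (e k) (cj (d k)) + br (d k) (cj (e k))) X
        = - h (e k) (br X (d k)) - h (d k) (br X (e k))"
      by (simp add: killing_addL t1[OF cX])
    also have "- h (e k) (br X (d k)) = h (br X (e k)) (d k)" by (simp add: skew[OF cX])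
    also have "h (br X (e k)) (d k) = (\<Sum>j<p. c k j * h (e j) (d k))"
      by (simp add: ex[OF that] h_sumL h_smultL)
    also have "h (d k) (br X (e k)) = (\<Sum>j<p. A k j)"
      by (simp add: ex[OF that] h_sumR h_smultR A_def)
    finally show ?thesis .
  qed
  have sw: "(\<Sum>k<p. \<Sum>j<p. c k j * h (e j) (d k)) = (\<Sum>k<p. \<Sum>j<p. A j k)"
  proof (intro sum.cong refl)
    fix k j assume "k \<in> {..<p}" "j \<in> {..<p}"
    then have kj: "k < p" "j < p" by auto
    have "h (e j) (d k) = - h (d j) (e k)" using dd kj by (simp add: eq_neg_iff_add_eq_0 add.commute)
    then show "c k j * h (e j) (d k) = A j k" unfolding A_def using ca[OF kj] by simp
  qed
  have "killing br (\<Sum>k<p. br (e k) (cj (d k)) + br (d k) (cj (e k))) X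
      = (\<Sum>k<p. (\<Sum>j<p. c k j * h (e j) (d k)) - (\<Sum>j<p. A k j))"
    by (simp add: killing_sumL trm)
  also have "\<dots> = (\<Sum>k<p. \<Sum>j<p. A j k) - (\<Sum>k<p. \<Sum>j<p. A k j)"
    by (simp add: sum_subtractf sw)
  also have "(\<Sum>k<p. \<Sum>j<p. A j k) = (\<Sum>j<p. \<Sum>k<p. A j k)" by (rule sum.swap)
  finally show ?thesis by simp
qed

end

context BSD begin

lemma pplus_sub: "vec.subspace (pplus br P H0)"
  unfolding vec.subspace_def pplus_def
  using subP
  by (auto simp: vec.subspace_add vec.subspace_scale vec.subspace_0 br_addR br_smultR
      vector_add_ldistrib vector_smult_assoc mult.commute)

lemma pplus_P: "x \<in> pplus br P H0 \<Longrightarrow> x \<in> P" by (simp add: pplus_def)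

lemma L_pplus: assumes X: "X \<in> L" and b: "b \<in> pplus br P H0" shows "br X b \<in> pplus br P H0"
proof -
  have bP: "b \<in> P" and hb: "br H0 b = \<i> *s b" using b by (auto simp: pplus_def)
  have J: "br H0 (br X b) + br X (br b H0) + br b (br H0 X) = 0" by (rule jacobi)
  have "br H0 X = 0" by (rule H0L[OF X])
  moreover have "br b H0 = - (\<i> *s b)" using hb br_anti[of b H0] by simp
  ultimately have "br H0 (br X b) = \<i> *s br X b"
    using J by (simp add: br_negR br_smultR add_eq_0_iff2)
  then show ?thesis using LP[OF X bP] by (simp add: pplus_def)
qed

lemma sigma_L: assumes "\<forall>k<p. f k \<in> pplus br P H0"
  shows "\<i> *s (\<Sum>k<p. br (f k) (cj (f k))) \<in> L"
proof -
  have "br (f k) (cj (f k)) \<in> L" if "k < p" for k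
    using PP[OF pplus_P cjP[OF pplus_P]] assms that by blast
  then have "(\<Sum>k<p. br (f k) (cj (f k))) \<in> L" using subL by (auto intro: vec.subspace_sum)
  then show ?thesis using subL by (rule vec.subspace_scale[rotated])
qed

lemma decomp: "\<forall>x. \<exists>a\<in>L. \<exists>b\<in>P. x = a + b"
  by (insert bsd, unfold bsd_data_def, elim conjE, assumption)
lemma H0P: "\<forall>x\<in>P. br H0 (br H0 x) = - x"
  by (insert bsd, unfold bsd_data_def, elim conjE, assumption)

end

lemma bsd_lb: "bsd_data br cj L P H0 \<Longrightarrow> lie_bracket br"
  by (unfold bsd_data_def, elim conjE, assumption)
lemma bsd_rs: "bsd_data br cj L P H0 \<Longrightarrow> real_structure br cj"
  by (unfold bsd_data_def, elim conjE, assumption)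


theorem lemma7:
  fixes br :: "complex^'n \<Rightarrow> complex^'n \<Rightarrow> complex^'n" and cj :: "complex^'n \<Rightarrow> complex^'n"
    and L P :: "(complex^'n) set" and H0 :: "complex^'n"
    and br' :: "complex^'m \<Rightarrow> complex^'m \<Rightarrow> complex^'m" and cj' :: "complex^'m \<Rightarrow> complex^'m"
    and L' P' :: "(complex^'m) set" and H0' :: "complex^'m"
    and \<rho> :: "complex^'m \<Rightarrow> complex^'n"
  assumes "bsd_data br cj L P H0"
    and "bsd_data br' cj' L' P' H0'"
    and "Vector_Spaces.linear (*s) (*s) \<rho>"
    and "inj \<rho>"
    and "\<forall>x. \<rho> (cj' x) = cj (\<rho> x)"
    and "\<forall>x y. \<rho> (br' x y) = br (\<rho> x) (\<rho> y)"
    and "\<forall>x. br H0 (\<rho> x) = \<rho> (br' H0' x)"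
  shows "Gr_critical (vec.dim (pplus br' P' H0')) br P H0
           (\<lambda>B. lnormsq br cj (Sigma br cj B)) (\<rho> ` pplus br' P' H0')"
proof -
  have lb: "lie_bracket br" by (rule bsd_lb[OF assms(1)])
  have rs: "real_structure br cj" by (rule bsd_rs[OF assms(1)])
  have lb': "lie_bracket br'" by (rule bsd_lb[OF assms(2)])
  have rs': "real_structure br' cj'" by (rule bsd_rs[OF assms(2)])
  interpret G: BSD br cj L P H0 by (intro BSD.intro LB.intro BSD_axioms.intro lb rs assms(1))
  interpret G': BSD br' cj' L' P' H0' by (intro BSD.intro LB.intro BSD_axioms.intro lb' rs' assms(2))
  interpret R: Vector_Spaces.linear "(*s)" "(*s)" \<rho> by (rule assms(3))
  define N where "N = pplus br P H0"
  define N' where "N' = pplus br' P' H0'"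
  define p where "p = vec.dim N'"
  define B where "B = \<rho> ` N'"
  note decomp = G.decomp
  note H0P = G.H0P
  have rhoN: "\<rho> x \<in> N" if x: "x \<in> N'" for x
  proof -
    have hx: "br' H0' x = \<i> *s x" using x by (simp add: N'_def pplus_def)
    have h1: "br H0 (\<rho> x) = \<i> *s \<rho> x" using assms(7) hx R.scale by simp
    obtain a b where ab: "a \<in> L" "b \<in> P" "\<rho> x = a + b" using decomp by blast
    have "br H0 (br H0 (\<rho> x)) = - \<rho> x" using h1 by (simp add: G.br_smultR vector_smult_assoc)
    moreover have "br H0 (br H0 (\<rho> x)) = - b"
      using ab G.H0L[OF ab(1)] H0P ab(2) by (simp add: G.br_addR)
    ultimately have "\<rho> x = b" by simp
    then show ?thesis using ab(2) h1 by (simp add: N_def pplus_def)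
  qed
  have subN': "vec.subspace N'" unfolding N'_def by (rule G'.pplus_sub)
  have BN: "B \<subseteq> N" using rhoN by (auto simp: B_def)
  have subB: "vec.subspace B" unfolding B_def by (rule R.subspace_image[OF subN'])
  have dimB: "vec.dim B = p"
    unfolding B_def p_def using vec.dim_image_eq[OF assms(3)] assms(4) by (simp add: inj_on_def inj_def)
  have GrB: "B \<in> Gr p br P H0" unfolding Gr_def using subB BN dimB by (simp add: N_def)
  have main: "((\<lambda>t. lnormsq br cj (Sigma br cj (vec.span (v t ` {..<p})))) has_real_derivative 0) (at 0)"
    if vN: "\<forall>t. \<forall>k<p. v t k \<in> N"
      and vi: "\<forall>t. inj_on (v t) {..<p} \<and> vec.independent (v t ` {..<p})"
      and v0: "vec.span (v 0 ` {..<p}) = B"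
      and vd: "\<forall>k<p. (\<lambda>t. v t k) differentiable (at 0)"
    for v :: "real \<Rightarrow> nat \<Rightarrow> complex^'n"
  proof -
    define e where "e t = gs G.h (v t) p" for t
    have wP: "\<forall>t. \<forall>j<p. v t j \<in> P" using vN G.pplus_P unfolding N_def by blast
    have gp: "G.orthonormal p (e t) \<and> vec.span (e t ` {..<p}) = vec.span (v t ` {..<p})" for t
      using G.gs_props[of p "v t" p] wP vi unfolding e_def by blast
    have dimS: "vec.dim (vec.span (v t ` {..<p})) = p" for t
    proof -
      have "vec.dim (vec.span (v t ` {..<p})) = card (v t ` {..<p})"
        using vi vec.dim_span_eq_card_independent by blast
      also have "\<dots> = p" using vi card_image[of "v t" "{..<p}"] by simp
      finally show ?thesis .
    qed
    define Sg where "Sg t = \<i> *s (\<Sum>k<p. br (e t k) (cj (e t k)))" for t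
    have SigEq: "Sigma br cj (vec.span (v t ` {..<p})) = Sg t" for t
      unfolding Sg_def using G.Sigma_eq[OF dimS] gp by blast
    have Feq: "(\<lambda>t. lnormsq br cj (Sigma br cj (vec.span (v t ` {..<p}))))
         = (\<lambda>t. - Re (killing br (Sg t) (cj (Sg t))))"
      by (simp add: SigEq lnormsq_def)
    have dif: "\<forall>j<p. \<exists>d. ((\<lambda>t. v t j) has_vector_derivative d) (at 0)"
      using vd vector_derivative_works by blast
    have ed: "\<forall>j\<in>{..<p}. \<exists>d. ((\<lambda>t. e t j) has_vector_derivative d) (at 0)"
      using G.gs_deriv[of p v, OF wP _ _ dif le_refl] vi unfolding e_def by blast
    obtain d where d: "\<forall>j\<in>{..<p}. ((\<lambda>t. e t j) has_vector_derivative d j) (at 0)"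
      using bchoice[OF ed] by blast
    have bd: "((\<lambda>t. br (e t k) (cj (e t k))) has_vector_derivative
        (br (e 0 k) (cj (d k)) + br (d k) (cj (e 0 k)))) (at 0)" if "k \<in> {..<p}" for k
      using bounded_bilinear.has_vector_derivative[OF G.bb_br d[rule_format, OF that]
          bounded_linear.has_vector_derivative[OF G.bl_cj d[rule_format, OF that]]] by simp
    define Sg' where "Sg' = \<i> *s (\<Sum>k<p. br (e 0 k) (cj (d k)) + br (d k) (cj (e 0 k)))"
    have bli: "bounded_linear (\<lambda>x::complex^'n. \<i> *s x)"
      by (rule bounded_bilinear.bounded_linear_right[OF bb_sm])
    have Sgd: "(Sg has_vector_derivative Sg') (at 0)"
      unfolding Sg_def[abs_def] Sg'_def
      by (rule bounded_linear.has_vector_derivative[OF bli has_vector_derivative_sum[OF bd]])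
    have cSgd: "((\<lambda>t. cj (Sg t)) has_vector_derivative cj Sg') (at 0)"
      by (rule bounded_linear.has_vector_derivative[OF G.bl_cj Sgd])
    have Kd: "((\<lambda>t. killing br (Sg t) (cj (Sg t))) has_vector_derivative
        (killing br (Sg 0) (cj Sg') + killing br Sg' (cj (Sg 0)))) (at 0)"
      by (rule bounded_bilinear.has_vector_derivative[OF G.bb_K Sgd cSgd])
    have Fd: "((\<lambda>t. - Re (killing br (Sg t) (cj (Sg t)))) has_real_derivative
        (- Re (killing br (Sg 0) (cj Sg') + killing br Sg' (cj (Sg 0))))) (at 0)"
      unfolding has_real_derivative_iff_has_vector_derivative
      by (rule has_vector_derivative_minus[OF bounded_linear.has_vector_derivative[OF bounded_linear_Re Kd]])
    have cS0: "cj (Sg 0) = Sg 0" unfolding Sg_def by (rule G.cj_sig1)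
    have cS': "cj Sg' = Sg'" unfolding Sg'_def by (rule G.cj_sig2)
    have on: "G.orthonormal p (e 0)" using gp by blast
    have e0B: "e 0 k \<in> B" if "k < p" for k
      using gp[of 0] v0 vec.span_base[of "e 0 k" "e 0 ` {..<p}"] that by auto
    have exf: "\<forall>k\<in>{..<p}. \<exists>f. f \<in> N' \<and> e 0 k = \<rho> f" using e0B unfolding B_def by blast
    obtain f where f: "\<forall>k\<in>{..<p}. f k \<in> N' \<and> e 0 k = \<rho> (f k)" using bchoice[OF exf] by blast
    define X' where "X' = \<i> *s (\<Sum>k<p. br' (f k) (cj' (f k)))"
    have X'L: "X' \<in> L'" unfolding X'_def N'_def by (rule G'.sigma_L) (use f N'_def in auto)
    have SgX: "Sg 0 = \<rho> X'"
    proof -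
      have "Sg 0 = \<i> *s (\<Sum>k<p. br (\<rho> (f k)) (cj (\<rho> (f k))))"
        unfolding Sg_def using f by (intro arg_cong[where f="\<lambda>x. \<i> *s x"] sum.cong) auto
      also have "\<dots> = \<i> *s (\<Sum>k<p. \<rho> (br' (f k) (cj' (f k))))"
        using assms(5,6) by simp
      also have "\<dots> = \<rho> X'" unfolding X'_def by (simp add: R.scale R.sum)
      finally show ?thesis .
    qed
    have inv: "\<forall>k<p. br (Sg 0) (e 0 k) \<in> vec.span (e 0 ` {..<p})"
    proof (intro allI impI)
      fix k assume k: "k < p"
      have "br (Sg 0) (e 0 k) = \<rho> (br' X' (f k))" using f k SgX assms(6) by simp
      moreover have "br' X' (f k) \<in> N'" unfolding N'_def
        by (rule G'.L_pplus[OF X'L]) (use f k N'_def in auto)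
      ultimately have "br (Sg 0) (e 0 k) \<in> B" unfolding B_def by blast
      then show "br (Sg 0) (e 0 k) \<in> vec.span (e 0 ` {..<p})" using gp[of 0] v0 by simp
    qed
    have dd: "\<forall>k<p. \<forall>j<p. G.h (d k) (e 0 j) + G.h (e 0 k) (d j) = 0"
    proof (intro allI impI)
      fix k j assume k: "k < p" and j: "j < p"
      have c: "(\<lambda>t. G.h (e t k) (e t j)) = (\<lambda>t. if k = j then 1 else 0)"
        using gp k j unfolding G.orthonormal_def by auto
      have d1: "((\<lambda>t. G.h (e t k) (e t j)) has_vector_derivative
          (G.h (e 0 k) (d j) + G.h (d k) (e 0 j))) (at 0)"
        using bounded_bilinear.has_vector_derivative[OF G.bb_h d[rule_format, of k] d[rule_format, of j]] k j
        by simp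
      have d2: "((\<lambda>t. G.h (e t k) (e t j)) has_vector_derivative 0) (at 0)"
        unfolding c by (rule has_vector_derivative_const)
      have "G.h (e 0 k) (d j) + G.h (d k) (e 0 j) = 0" by (rule vector_derivative_unique_at[OF d1 d2])
      then show "G.h (d k) (e 0 j) + G.h (e 0 k) (d j) = 0" by (simp add: add.commute)
    qed
    have K0: "killing br Sg' (Sg 0) = 0"
      unfolding Sg'_def by (simp add: G.killing_smultL G.key[OF on cS0 inv dd])
    have val: "- Re (killing br (Sg 0) (cj Sg') + killing br Sg' (cj (Sg 0))) = 0"
      using K0 by (simp add: cS0 cS' G.killing_sym[of "Sg 0" Sg'])
    show ?thesis unfolding Feq using Fd val by simp
  qed
  show ?thesis
    unfolding Gr_critical_def
    using GrB main unfolding N'_def[symmetric] p_def[symmetric] B_def[symmetric] N_def[symmetric]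
    by blast
qed

end
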